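(* For all integers $n\ge0$, $0\le k\le n$, and all $\beta,\varphi\in[0,2\pi)$, $$[\mathcal D Z^{n,k}](\beta,\varphi)=\frac{2e^{i(n-2k)\varphi}}{n+1}\times\begin{cases}\cos[(n+1)(\beta-\varphi)], & n \text{ even},\\ i\sin[(n+1)(\beta-\varphi)], & n\text{ odd}.\end{cases}$$
   Context: Let $\mathbb D$ be the open unit disc in $\mathbb R^2\cong\mathbb C$ ($z=x^1+ix^2$). The scalar fan-beam Radon transform of a (complex-valued) function $a$ on $\mathbb D$ is defined for $\beta,\varphi\in[0,2\pi)$ with $\cos(\beta-\varphi)\ge0$ by $$[\mathcal D a](\beta,\varphi)=\int_0^{2\cos(\beta-\varphi)}a(\cos\beta-l\cos\varphi,\ \sin\beta-l\sin\varphi)\,dl,$$ i.e. the integral over the chord of the unit circle starting at $e^{i\beta}$ in direction $-(\cos\varphi,\sin\varphi)$; and for $\cos(\beta-\varphi)<0$ by $[\mathcal D a](\beta,\varphi)=-[\mathcal D a](\beta,\varphi+\pi)$ (angle taken mod $2\pi$). Zernike polynomials (paper's numbering), for $n\ge0$, $0\le k\le n$: $$Z^{n,k}(z,\bar z)=\sum_{s=0}^{k}\binom{k}{s}\binom{n-k}{s}z^{n-k-s}(1-z\bar z)^s(-\bar z)^{k-s}\ \ (0\le k\le [n/2]),\qquad Z^{n,k}=(-1)^n\overline{Z^{n,n-k}}\ \ ([n/2]<k\le n),$$ where $[\cdot]$ is the integer part. *)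

theory Defs
  imports "HOL-Analysis.Analysis"
begin

text \<open>Chord integral: integral over the chord of the unit circle starting at
  e^{i beta} in direction -(cos phi, sin phi), of length 2 cos(beta - phi).\<close>
definition chord_integral :: "(complex \<Rightarrow> complex) \<Rightarrow> real \<Rightarrow> real \<Rightarrow> complex" where
  "chord_integral a \<beta> \<phi> =
     integral {0 .. 2 * cos (\<beta> - \<phi>)}
       (\<lambda>l. a (Complex (cos \<beta> - l * cos \<phi>) (sin \<beta> - l * sin \<phi>)))"

text \<open>For cos(beta-phi) < 0 it is minus the value at
  phi + pi (the integrand depends on phi only through cos phi, sin phi, so reducing
  phi + pi mod 2 pi makes no difference).\<close>
definition fanbeam :: "(complex \<Rightarrow> complex) \<Rightarrow> real \<Rightarrow> real \<Rightarrow> complex" where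
  "fanbeam a \<beta> \<phi> =
     (if cos (\<beta> - \<phi>) \<ge> 0 then chord_integral a \<beta> \<phi>
      else - chord_integral a \<beta> (\<phi> + pi))"

definition zernike_low :: "nat \<Rightarrow> nat \<Rightarrow> complex \<Rightarrow> complex" where
  "zernike_low n k z =
     (\<Sum>s = 0..k. of_nat (k choose s) * of_nat ((n - k) choose s)
        * z ^ (n - k - s) * (1 - z * cnj z) ^ s * (- cnj z) ^ (k - s))"

definition zernike :: "nat \<Rightarrow> nat \<Rightarrow> complex \<Rightarrow> complex" where
  "zernike n k z =
     (if k \<le> n div 2 then zernike_low n k z
      else (-1) ^ n * cnj (zernike_low n (n - k) z))"

end

theory Submission
  imports Defs "HOL-Computational_Algebra.Polynomial"
begin

lemma coeff_lin_pow:
  fixes a b :: "'a::comm_ring_1"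
  shows "coeff ([:a, b:] ^ n) i = of_nat (n choose i) * b ^ i * a ^ (n - i)"
proof (cases "i \<le> n")
  case True then show ?thesis by (rule coeff_linear_poly_power)
next
  case False
  have "degree ([:a, b:] ^ n) \<le> n"
    by (rule order.trans[OF degree_power_le]) (simp add: degree_pCons_le)
  with False have "coeff ([:a, b:] ^ n) i = 0" by (intro coeff_eq_0) auto
  with False show ?thesis by (simp add: binomial_eq_0)
qed

lemma t1:
  fixes z \<zeta> :: complex
  assumes "i \<le> m"
  shows "(\<Sum>s\<le>i. coeff ([:z,1:]^a) s * coeff ([:1-\<zeta>*z, -\<zeta>:]^m) (i-s)) = (\<Sum>s=0..i. of_nat (a choose s) * of_nat (m choose (m - i + s)) * z^(a-s)
            * (1 - \<zeta>*z)^(m-i+s) * (-\<zeta>)^(i-s))"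
  proof (rule sum.cong)
    fix s assume s: "s \<in> {0..i}"
    have "m choose (i - s) = m choose (m - (i - s))"
      using s assms by (intro binomial_symmetric) auto
    moreover have "m - (i - s) = m - i + s" using s assms by auto
    ultimately show "coeff ([:z,1:]^a) s * coeff ([:1-\<zeta>*z, -\<zeta>:]^m) (i-s) = of_nat (a choose s) * of_nat (m choose (m - i + s)) * z^(a-s)
            * (1 - \<zeta>*z)^(m-i+s) * (-\<zeta>)^(i-s)"
      by (simp add: coeff_lin_pow)
  qed (auto simp: atLeast0AtMost)

lemma t2:
  fixes z \<zeta> :: complex
  shows "[:z,1:]^a * (of_nat (m choose j) * (smult (-\<zeta>) [:z,1:])^j * 1^(m-j)) = smult (of_nat (m choose j) * (-\<zeta>)^j) ([:z,1:]^(a+j))"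
proof -
  have "(smult (-\<zeta>) [:z,1:])^j = smult ((-\<zeta>)^j) ([:z,1:]^j)" by (rule smult_power)
  then show ?thesis by (simp only: of_nat_mult_conv_smult power_one mult_1_right mult_smult_right mult_smult_left smult_smult power_add) (simp add: mult_ac)
qed


lemma coeff_id:
  fixes z \<zeta> :: complex
  assumes "i \<le> m"
  shows "(\<Sum>s=0..i. of_nat (a choose s) * of_nat (m choose (m - i + s)) * z^(a-s)
            * (1 - \<zeta>*z)^(m-i+s) * (-\<zeta>)^(i-s))
       = (\<Sum>j=0..m. of_nat (m choose j) * of_nat ((a+j) choose i) * (-\<zeta>)^j * z^(a+j-i))"
proof -
  define p where "p = [:z,1:]^a * [:1-\<zeta>*z, -\<zeta>:]^m"
  have 1: "coeff p i = (\<Sum>s=0..i. of_nat (a choose s) * of_nat (m choose (m - i + s)) * z^(a-s)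
            * (1 - \<zeta>*z)^(m-i+s) * (-\<zeta>)^(i-s))"
    unfolding p_def coeff_mult using t1[OF assms] .
  have "[:1-\<zeta>*z, -\<zeta>:] = smult (-\<zeta>) [:z,1:] + 1" by (simp add: one_pCons)
  then have "[:1-\<zeta>*z, -\<zeta>:]^m = (\<Sum>j\<le>m. of_nat (m choose j) * (smult (-\<zeta>) [:z,1:])^j * 1^(m-j))"
    by (simp only: binomial_ring)
  then have "p = (\<Sum>j\<le>m. [:z,1:]^a * (of_nat (m choose j) * (smult (-\<zeta>) [:z,1:])^j * 1^(m-j)))"
    unfolding p_def by (simp only: sum_distrib_left)
  also have "\<dots> = (\<Sum>j\<le>m. smult (of_nat (m choose j) * (-\<zeta>)^j) ([:z,1:]^(a+j)))"
    by (simp only: t2)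
  finally have "coeff p i = (\<Sum>j\<le>m. (of_nat (m choose j) * (-\<zeta>)^j) * coeff ([:z,1:]^(a+j)) i)"
    by (simp only: coeff_sum coeff_smult)
  also have "\<dots> = (\<Sum>j=0..m. of_nat (m choose j) * of_nat ((a+j) choose i) * (-\<zeta>)^j * z^(a+j-i))"
    unfolding atLeast0AtMost by (intro sum.cong refl) (simp add: coeff_lin_pow mult_ac)
  finally show ?thesis using 1 by simp
qed


definition M :: "nat \<Rightarrow> nat \<Rightarrow> complex \<Rightarrow> complex \<Rightarrow> complex" where
  "M n k z \<zeta> = (\<Sum>i=0..k. of_nat (k choose i) * of_nat ((n-k+i) choose k) * (-\<zeta>)^i * z^((n-k+i)-k))"

definition Psi :: "nat \<Rightarrow> nat \<Rightarrow> complex \<Rightarrow> complex \<Rightarrow> complex" where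
  "Psi n j z \<zeta> = (\<Sum>i=0..j. of_nat (j choose i) * of_nat ((n-j+i) choose (j-1)) / of_nat j
      * ((-\<zeta>)^i * z^((n-j+i+1)-j)))"

lemma zernike_low_M:
  assumes "k \<le> n"
  shows "zernike_low n k z = M n k z (cnj z)"
proof -
  have "zernike_low n k z = (\<Sum>s=0..k. of_nat ((n-k) choose s) * of_nat (k choose (k - k + s)) * z^((n-k)-s)
            * (1 - cnj z*z)^(k-k+s) * (-cnj z)^(k-s))"
    unfolding zernike_low_def by (intro sum.cong) (auto simp: mult_ac)
  also have "\<dots> = M n k z (cnj z)"
    unfolding M_def by (subst coeff_id) auto
  finally show ?thesis .
qed

lemma M_0: "M n 0 z \<zeta> = z^n"
  by (simp add: M_def)

lemma Psi_circle:
  assumes "1 \<le> j" "z * \<zeta> = 1"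
  shows "Psi n j z \<zeta> = 0"
proof -
  have "(\<Sum>i=0..j. of_nat (j choose i) * of_nat ((n-j+i) choose (j-1)) * (-\<zeta>)^i * z^((n-j)+i-(j-1)))
     = (\<Sum>s=0..j-1. of_nat ((n-j) choose s) * of_nat (j choose (j - (j-1) + s)) * z^((n-j)-s)
            * (1 - \<zeta>*z)^(j-(j-1)+s) * (-\<zeta>)^((j-1)-s))"
    by (subst coeff_id) auto
  also have "\<dots> = 0" using assms by (simp add: mult.commute)
  finally have 0: "(\<Sum>i=0..j. of_nat (j choose i) * of_nat ((n-j+i) choose (j-1)) * (-\<zeta>)^i * z^((n-j)+i-(j-1))) = 0" .
  have "Psi n j z \<zeta> = (\<Sum>i=0..j. of_nat (j choose i) * of_nat ((n-j+i) choose (j-1)) * (-\<zeta>)^i * z^((n-j)+i-(j-1))) / of_nat j"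
    unfolding Psi_def sum_divide_distrib
    by (intro sum.cong refl) (use assms(1) in \<open>auto simp: Suc_diff_le\<close>)
  with 0 show ?thesis by simp
qed


lemma term_deriv:
  fixes P Q u v w :: complex
  shows "((\<lambda>w. (- (Q - w * v))^i * (P - w*u)^p) has_field_derivative
     (of_nat i * (- (Q - w * v))^(i-1) * v * (P-w*u)^p + (- (Q - w * v))^i * (of_nat p * (P-w*u)^(p-1) * (-u)))) (at w)"
  by (auto intro!: derivative_eq_intros)

lemma binom_aux: "1 \<le> j \<Longrightarrow> (m choose (j-1)) * (m+1-j) = j * (m choose j)"
proof -
  assume j: "1 \<le> j"
  consider "m < j - 1" | "m = j - 1" | "m \<ge> j" by linarith
  then show ?thesis
  proof cases
    case 3
    have "j * (m choose j) = m * ((m-1) choose (j-1))" using j by (intro times_binomial_minus1_eq) auto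
    moreover have "(m - (j-1)) * (m choose (j-1)) = m * ((m-1) choose (j-1))" by (rule binomial_absorb_comp)
    moreover have "m - (j-1) = m+1-j" using j 3 by auto
    ultimately show ?thesis by (simp add: mult.commute)
  qed (use j in \<open>auto simp: binomial_eq_0\<close>)
qed

lemma Psi_deriv:
  fixes P Q u v w :: complex
  assumes "1 \<le> j" "j \<le> n"
  shows "((\<lambda>w. Psi n j (P - w*u) (Q - w * v)) has_field_derivative
     (v * M n (j-1) (P-w*u) (Q-w * v) - u * M n j (P-w*u) (Q-w * v))) (at w)"
proof -
  define z where "z = P - w*u"
  define \<zeta> where "\<zeta> = Q - w * v"
  define c where "c i = of_nat (j choose i) * of_nat ((n-j+i) choose (j-1)) / (of_nat j :: complex)" for i
  define p where "p i = (n-j+i+1)-j" for i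
  have D: "((\<lambda>w. Psi n j (P - w*u) (Q - w * v)) has_field_derivative
     (\<Sum>i=0..j. c i * (of_nat i * (-\<zeta>)^(i-1) * v * z^(p i) + (-\<zeta>)^i * (of_nat (p i) * z^(p i - 1) * (-u))))) (at w)"
    unfolding Psi_def z_def \<zeta>_def
    unfolding c_def p_def
    apply (rule DERIV_sum)
    apply (rule DERIV_cmult)
    apply (rule term_deriv)
    done
  have B: "(\<Sum>i=0..j. c i * ((-\<zeta>)^i * (of_nat (p i) * z^(p i - 1) * (-u)))) = - u * M n j z \<zeta>"
    unfolding M_def sum_distrib_left
  proof (intro sum.cong refl)
    fix i assume "i \<in> {0..j}"
    define m where "m = n - j + i"
    have nat: "(m choose (j-1)) * (m+1-j) = j * (m choose j)" using assms by (intro binom_aux)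
    have cc: "c i * of_nat (p i) = of_nat (j choose i) * of_nat (m choose j)"
    proof -
      have "c i * of_nat (p i) = of_nat (j choose i) * (of_nat ((m choose (j-1)) * (m+1-j)) / of_nat j :: complex)"
        unfolding c_def p_def m_def by (simp add: field_simps)
      also have "\<dots> = of_nat (j choose i) * of_nat (m choose j)"
        unfolding nat using assms by simp
      finally show ?thesis .
    qed
    show "c i * ((-\<zeta>)^i * (of_nat (p i) * z^(p i - 1) * (-u))) =
      - u * (of_nat (j choose i) * of_nat ((n-j+i) choose j) * (-\<zeta>)^i * z^((n-j+i)-j))"
    proof (cases "p i = 0")
      case True
      then have "m < j" unfolding p_def m_def by auto
      then show ?thesis using True by (simp add: m_def[symmetric] binomial_eq_0)
    next
      case False
      then have "p i - 1 = m - j" unfolding p_def m_def by auto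
      then have "c i * ((-\<zeta>)^i * (of_nat (p i) * z^(p i - 1) * (-u))) = - u * ((c i * of_nat (p i)) * (-\<zeta>)^i * z^(m-j))"
        by (simp add: mult_ac)
      then show ?thesis unfolding cc m_def by (simp add: mult_ac)
    qed
  qed
  obtain t where t: "j = Suc t" using assms by (cases j) auto
  have tn: "t < n" using assms t by auto
  define g where "g i = c i * (of_nat i * (-\<zeta>)^(i-1) * v * z^(p i))" for i
  have A1: "(\<Sum>i=0..j. g i) = (\<Sum>i=0..t. g (Suc i))"
    unfolding t sum.atLeast0_atMost_Suc_shift by (simp add: g_def)
  have A2: "(\<Sum>i=0..t. g (Suc i)) = v * M n t z \<zeta>"
    unfolding M_def sum_distrib_left
  proof (intro sum.cong refl)
    fix i assume "i \<in> {0..t}"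
    have e1: "n - Suc t + Suc i = n - t + i" using tn by auto
    have e2: "p (Suc i) = (n - t + i) - t" unfolding p_def t using tn by auto
    have e3: "of_nat (Suc t choose Suc i) * of_nat (Suc i) = (of_nat (Suc t) * of_nat (t choose i) :: complex)"
      by (metis Suc_times_binomial_eq of_nat_mult)
    have "c (Suc i) * of_nat (Suc i) = (of_nat (Suc t choose Suc i) * of_nat (Suc i)) * of_nat ((n - t + i) choose t) / of_nat (Suc t)"
      unfolding c_def t e1 by (simp only: mult_ac times_divide_eq_left times_divide_eq_right diff_Suc_1)
    also have "\<dots> = of_nat (t choose i) * of_nat ((n - t + i) choose t)"
      unfolding e3 by (simp del: of_nat_Suc)
    finally have cc: "c (Suc i) * of_nat (Suc i) = of_nat (t choose i) * of_nat ((n - t + i) choose t)" .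
    have "g (Suc i) = (c (Suc i) * of_nat (Suc i)) * ((-\<zeta>)^i * v * z^((n - t + i) - t))"
      unfolding g_def e2 by (simp only: mult_ac diff_Suc_1)
    then show "g (Suc i) = v * (of_nat (t choose i) * of_nat ((n - t + i) choose t) * (-\<zeta>)^i * z^((n - t + i) - t))"
      unfolding cc by (simp only: mult_ac)
  qed
  have A: "(\<Sum>i=0..j. c i * (of_nat i * (-\<zeta>)^(i-1) * v * z^(p i))) = v * M n (j-1) z \<zeta>"
    using A1 A2 unfolding g_def t by simp
  have "(\<Sum>i=0..j. c i * (of_nat i * (-\<zeta>)^(i-1) * v * z^(p i) + (-\<zeta>)^i * (of_nat (p i) * z^(p i - 1) * (-u))))
     = v * M n (j-1) z \<zeta> - u * M n j z \<zeta>"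
    unfolding distrib_left sum.distrib A B by (simp only: diff_conv_add_uminus mult_minus_left)
  note D[unfolded this]
  then show ?thesis unfolding z_def \<zeta>_def .
qed


lemma telescope:
  fixes f :: "nat \<Rightarrow> 'a::comm_ring_1"
  shows "(\<Sum>j=1..k. r^(k-j) * (f j - r * f (j-1))) = f k - r^k * f 0"
proof (induction k)
  case 0 then show ?case by simp
next
  case (Suc k)
  have "(\<Sum>j=1..Suc k. r^(Suc k-j) * (f j - r * f (j-1)))
      = (\<Sum>j=1..k. r^(Suc k-j) * (f j - r * f (j-1))) + (f (Suc k) - r * f k)"
    by simp
  also have "(\<Sum>j=1..k. r^(Suc k-j) * (f j - r * f (j-1))) = r * (\<Sum>j=1..k. r^(k-j) * (f j - r * f (j-1)))"
    unfolding sum_distrib_left by (intro sum.cong refl) (simp add: Suc_diff_le)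
  also have "r * (\<Sum>j=1..k. r^(k-j) * (f j - r * f (j-1))) = r * (f k - r^k * f 0)"
    by (simp only: Suc.IH)
  finally show ?case by (simp add: algebra_simps)
qed

lemma aux_cancel:
  fixes N X Y u v :: complex
  assumes "N \<noteq> 0"
  shows "(- (X * v) / N) * (N * Y * (-u)) = X * (u * v) * Y"
  using assms by (simp add: field_simps)

definition Fa :: "nat \<Rightarrow> nat \<Rightarrow> complex \<Rightarrow> complex \<Rightarrow> complex \<Rightarrow> complex \<Rightarrow> complex \<Rightarrow> complex" where
  "Fa n k P Q u v w = (\<Sum>j=1..k. (- v * (v * v)^(k-j)) * Psi n j (P - w*u) (Q - w * v))
      + (- ((v * v)^k * v) / of_nat (n+1)) * (P - w*u)^(n+1)"

lemma Fa_deriv: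
  fixes P Q u v w :: complex
  assumes "k \<le> n" "u * v = 1"
  shows "(Fa n k P Q u v has_field_derivative M n k (P - w*u) (Q - w * v)) (at w)"
proof -
  define z where "z = P - w*u"
  define \<zeta> where "\<zeta> = Q - w * v"
  define r where "r = v * v"
  have pw: "((\<lambda>w. (P - w*u)^(n+1)) has_field_derivative (of_nat (n+1) * z^n * (-u))) (at w)"
  proof -
    have d: "((\<lambda>w. (P - w*u)^Suc n) has_field_derivative (1 + of_nat n) * ((-u) * z^n)) (at w)"
      unfolding z_def by (intro DERIV_power_Suc) (auto intro!: derivative_eq_intros)
    have eq: "(1 + of_nat n) * ((-u) * z^n) = of_nat (n+1) * z^n * (-u)" by (simp add: algebra_simps)
    show ?thesis using d unfolding eq Suc_eq_plus1 .
  qed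
  have D: "(Fa n k P Q u v has_field_derivative
      (\<Sum>j=1..k. (- v * r^(k-j)) * (v * M n (j-1) z \<zeta> - u * M n j z \<zeta>))
      + (- (r^k * v) / of_nat (n+1)) * (of_nat (n+1) * z^n * (-u))) (at w)"
    unfolding Fa_def r_def[symmetric] z_def \<zeta>_def
    apply (rule DERIV_add)
     apply (rule DERIV_sum)
     apply (rule DERIV_cmult)
     apply (rule Psi_deriv)
    using assms(1) apply auto[2]
    apply (rule DERIV_cmult)
    using pw unfolding z_def .
  have "(\<Sum>j=1..k. (- v * r^(k-j)) * (v * M n (j-1) z \<zeta> - u * M n j z \<zeta>))
      = (\<Sum>j=1..k. r^(k-j) * (M n j z \<zeta> - r * M n (j-1) z \<zeta>))"
  proof (intro sum.cong refl)
    fix j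
    have "(- v * r^(k-j)) * (v * M n (j-1) z \<zeta> - u * M n j z \<zeta>) =
       r^(k-j) * ((u * v) * M n j z \<zeta> - (v * v) * M n (j-1) z \<zeta>)" by (simp add: algebra_simps)
    then show "(- v * r^(k-j)) * (v * M n (j-1) z \<zeta> - u * M n j z \<zeta>) =
       r^(k-j) * (M n j z \<zeta> - r * M n (j-1) z \<zeta>)" using assms(2) by (simp add: r_def)
  qed
  also have "\<dots> = M n k z \<zeta> - r^k * M n 0 z \<zeta>" by (rule telescope)
  finally have 1: "(\<Sum>j=1..k. (- v * r^(k-j)) * (v * M n (j-1) z \<zeta> - u * M n j z \<zeta>)) = M n k z \<zeta> - r^k * z^n"
    by (simp add: M_0)
  have "(- (r^k * v) / of_nat (n+1)) * (of_nat (n+1) * z^n * (-u)) = r^k * (u * v) * z^n"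
    by (rule aux_cancel) (metis of_nat_neq_0 Suc_eq_plus1)
  then have 2: "(- (r^k * v) / of_nat (n+1)) * (of_nat (n+1) * z^n * (-u)) = r^k * z^n"
    using assms(2) by simp
  have eq: "(\<Sum>j=1..k. (- v * r^(k-j)) * (v * M n (j-1) z \<zeta> - u * M n j z \<zeta>))
      + (- (r^k * v) / of_nat (n+1)) * (of_nat (n+1) * z^n * (-u)) = M n k z \<zeta>"
    unfolding 1 2 by simp
  show ?thesis using D[unfolded eq] unfolding z_def \<zeta>_def .
qed



definition R :: "nat \<Rightarrow> nat \<Rightarrow> real \<Rightarrow> real \<Rightarrow> complex" where
  "R n k \<beta> \<phi> = 2 * exp (\<i> * of_int (int n - 2 * int k) * of_real \<phi>) / of_nat (n + 1)
    * (if even n then of_real (cos (real (n + 1) * (\<beta> - \<phi>)))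
       else \<i> * of_real (sin (real (n + 1) * (\<beta> - \<phi>))))"

lemma h_lin: "(- c0 / N) * (s * c1 - c2) = - (s * (c0 * c1) - c0 * c2) / (N::complex)"
  by (simp add: algebra_simps divide_inverse)

lemma alg:
  fixes \<beta> \<phi> :: real
  shows "(- ((cis (-\<phi>) * cis (-\<phi>))^k * cis (-\<phi>)) / of_nat (n+1)) * ((- cis (2*\<phi> - \<beta>))^(n+1) - cis \<beta>^(n+1))
     = R n k \<beta> \<phi>"
proof -
  define X where "X = (real n - 2 * real k) * \<phi>"
  define T where "T = real (n+1) * (\<beta> - \<phi>)"
  define N where "N = (of_nat (n+1) :: complex)"
  define a0 where "a0 = -(2*real k+1)*\<phi>"
  have e1: "(cis (-\<phi>) * cis (-\<phi>))^k * cis (-\<phi>) = cis a0"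
  proof -
    have "(cis (-\<phi>) * cis (-\<phi>))^k * cis (-\<phi>) = cis (real k * (-\<phi> + -\<phi>) + -\<phi>)"
      by (simp only: cis_mult Complex.DeMoivre)
    also have "\<dots> = cis a0" unfolding a0_def by (rule arg_cong[where f=cis]) (simp add: algebra_simps)
    finally show ?thesis .
  qed
  have e2: "(- cis (2*\<phi> - \<beta>))^(n+1) = (-1)^(n+1) * cis (real (n+1) * (2*\<phi> - \<beta>))"
    by (subst power_minus) (simp only: Complex.DeMoivre)
  have e3: "cis \<beta> ^ (n+1) = cis (real (n+1) * \<beta>)" by (rule Complex.DeMoivre)
  have a1: "cis a0 * cis (real (n+1) * (2*\<phi> - \<beta>)) = cis X * cis (-T)"
    unfolding cis_mult X_def T_def a0_def by (rule arg_cong[where f=cis]) (simp add: algebra_simps)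
  have a2: "cis a0 * cis (real (n+1) * \<beta>) = cis X * cis T"
    unfolding cis_mult X_def T_def a0_def by (rule arg_cong[where f=cis]) (simp add: algebra_simps)
  have L: "(- ((cis (-\<phi>) * cis (-\<phi>))^k * cis (-\<phi>)) / of_nat (n+1)) * ((- cis (2*\<phi> - \<beta>))^(n+1) - cis \<beta>^(n+1))
     = - ((-1)^(n+1) * (cis a0 * cis (real (n+1) * (2*\<phi> - \<beta>))) - cis a0 * cis (real (n+1) * \<beta>)) / N"
    unfolding e1 e2 e3 N_def by (rule h_lin)
  have ex: "exp (\<i> * of_int (int n - 2 * int k) * of_real \<phi>) = cis X"
    unfolding cis_conv_exp X_def by (simp add: algebra_simps)
  have c1: "cis (-T) + cis T = 2 * of_real (cos T)" by (simp add: complex_eq_iff)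
  have c2: "cis T - cis (-T) = 2 * (\<i> * of_real (sin T))" by (simp add: complex_eq_iff)
  show ?thesis
  proof (cases "even n")
    case True
    then have "(-1::complex)^(n+1) = -1" by simp
    then have "(- ((cis (-\<phi>) * cis (-\<phi>))^k * cis (-\<phi>)) / of_nat (n+1)) * ((- cis (2*\<phi> - \<beta>))^(n+1) - cis \<beta>^(n+1))
       = cis X * (cis (-T) + cis T) / N"
      unfolding L a1 a2 by (simp add: algebra_simps)
    also have "\<dots> = R n k \<beta> \<phi>" unfolding c1 unfolding R_def ex N_def T_def using True by simp
    finally show ?thesis .
  next
    case False
    then have "(-1::complex)^(n+1) = 1" by simp
    then have "(- ((cis (-\<phi>) * cis (-\<phi>))^k * cis (-\<phi>)) / of_nat (n+1)) * ((- cis (2*\<phi> - \<beta>))^(n+1) - cis \<beta>^(n+1))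
       = cis X * (cis T - cis (-T)) / N"
      unfolding L a1 a2 by (simp add: algebra_simps)
    also have "\<dots> = R n k \<beta> \<phi>" unfolding c2 unfolding R_def ex N_def T_def using False by simp
    finally show ?thesis .
  qed
qed


lemma R_cis: "R n k \<beta> \<phi> = 2 * cis ((real n - 2 * real k) * \<phi>) / of_nat (n+1)
   * (if even n then of_real (cos (real (n+1) * (\<beta> - \<phi>))) else \<i> * of_real (sin (real (n+1) * (\<beta> - \<phi>))))"
proof -
  have ex: "exp (\<i> * of_int (int n - 2 * int k) * of_real \<phi>) = cis ((real n - 2 * real k) * \<phi>)"
    unfolding cis_conv_exp by (simp add: algebra_simps)
  show ?thesis unfolding R_def ex ..
qed

lemma cis_int_pi: "cis ((real n - 2 * real k) * pi) = (-1)^n"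
proof -
  have c: "cos ((real n - 2 * real k) * pi) = (-1)^n"
    using cos_npi_int[of "int n - 2 * int k"] by (simp add: mult.commute)
  have s: "sin ((real n - 2 * real k) * pi) = 0"
    using sin_npi_int[of "int n - 2 * int k"] by (simp add: mult.commute)
  show ?thesis by (simp add: complex_eq_iff c s)
qed

lemma R_shift: "R n k \<beta> (\<phi> + pi) = - R n k \<beta> \<phi>"
proof -
  define X where "X = (real n - 2 * real k) * \<phi>"
  define T where "T = real (n+1) * (\<beta> - \<phi>)"
  have cX: "cis ((real n - 2 * real k) * (\<phi> + pi)) = cis X * (-1)^n"
  proof -
    have "cis ((real n - 2 * real k) * (\<phi> + pi)) = cis X * cis ((real n - 2 * real k) * pi)"
      unfolding cis_mult X_def by (rule arg_cong[where f=cis]) (simp add: algebra_simps)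
    then show ?thesis by (simp add: cis_int_pi)
  qed
  have targ: "real (n+1) * (\<beta> - (\<phi> + pi)) = T - real (n+1) * pi" unfolding T_def by (simp add: algebra_simps)
  have cT: "cos (real (n+1) * (\<beta> - (\<phi> + pi))) = (-1)^(n+1) * cos T"
    unfolding targ cos_diff by (simp only: cos_npi sin_npi) simp
  have sT: "sin (real (n+1) * (\<beta> - (\<phi> + pi))) = (-1)^(n+1) * sin T"
    unfolding targ sin_diff by (simp only: cos_npi sin_npi) simp
  show ?thesis
    unfolding R_cis cX cT sT unfolding X_def[symmetric] T_def[symmetric]
    by (cases "even n") (simp_all add: algebra_simps)
qed

lemma R_conj:
  assumes "k \<le> n"
  shows "(-1)^n * cnj (R n (n-k) \<beta> \<phi>) = R n k \<beta> \<phi>"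
proof -
  have a: "real n - 2 * real (n - k) = - (real n - 2 * real k)" using assms by (simp add: of_nat_diff)
  show ?thesis unfolding R_cis a
    by (cases "even n") (simp_all add: cis_cnj algebra_simps)
qed

lemma endpt: "cis \<beta> - of_real (2 * cos (\<beta> - \<phi>)) * cis \<phi> = - cis (2*\<phi> - \<beta>)"
proof -
  have "of_real (2 * cos (\<beta> - \<phi>)) = cis (\<beta> - \<phi>) + cis (-(\<beta> - \<phi>))" by (simp add: complex_eq_iff cos_diff sin_diff)
  then have "of_real (2 * cos (\<beta> - \<phi>)) * cis \<phi> = cis (\<beta> - \<phi> + \<phi>) + cis (-(\<beta> - \<phi>) + \<phi>)"
    by (simp add: distrib_right cis_mult)
  also have "\<dots> = cis \<beta> + cis (2*\<phi> - \<beta>)" by (simp add: algebra_simps)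
  finally show ?thesis by simp
qed

lemma endpt2: "cis (-\<beta>) - of_real (2 * cos (\<beta> - \<phi>)) * cis (-\<phi>) = - cis (\<beta> - 2*\<phi>)"
proof -
  have h: "cos (\<phi> - \<beta>) = cos (\<beta> - \<phi>)" by (simp add: cos_diff)
  show ?thesis using endpt[of "-\<beta>" "-\<phi>"] by (simp add: h algebra_simps)
qed

lemma fanbeam_cnj: "fanbeam (\<lambda>z. cnj (f z)) \<beta> \<phi> = cnj (fanbeam f \<beta> \<phi>)"
  unfolding fanbeam_def chord_integral_def by (simp add: integral_cnj)

lemma fanbeam_neg: "fanbeam (\<lambda>z. - f z) \<beta> \<phi> = - fanbeam f \<beta> \<phi>"
  unfolding fanbeam_def chord_integral_def by simp


lemma chord_M:
  fixes \<beta> \<phi> :: real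
  assumes "k \<le> n" "cos (\<beta> - \<phi>) \<ge> 0"
  shows "chord_integral (\<lambda>z. M n k z (cnj z)) \<beta> \<phi> = R n k \<beta> \<phi>"
proof -
  define P where "P = cis \<beta>"
  define Q where "Q = cis (-\<beta>)"
  define u where "u = cis \<phi>"
  define v where "v = cis (-\<phi>)"
  define L where "L = 2 * cos (\<beta> - \<phi>)"
  have uv: "u * v = 1" by (simp add: u_def v_def cis_mult)
  have PQ: "P * Q = 1" by (simp add: P_def Q_def cis_mult)
  have int_eq: "M n k (Complex (cos \<beta> - x * cos \<phi>) (sin \<beta> - x * sin \<phi>))
       (cnj (Complex (cos \<beta> - x * cos \<phi>) (sin \<beta> - x * sin \<phi>)))
      = M n k (P - of_real x * u) (Q - of_real x * v)" for x :: real
  proof -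
    have 1: "Complex (cos \<beta> - x * cos \<phi>) (sin \<beta> - x * sin \<phi>) = P - of_real x * u"
      by (simp add: complex_eq_iff P_def u_def)
    have 2: "cnj (P - of_real x * u) = Q - of_real x * v"
      by (simp add: complex_eq_iff P_def u_def Q_def v_def)
    show ?thesis unfolding 1 2 ..
  qed
  have L0: "0 \<le> L" using assms by (simp add: L_def)
  have FTC: "((\<lambda>x. M n k (P - of_real x * u) (Q - of_real x * v)) has_integral
      ((\<lambda>x. Fa n k P Q u v (of_real x)) L - (\<lambda>x. Fa n k P Q u v (of_real x)) 0)) {0..L}"
    apply (rule fundamental_theorem_of_calculus[OF L0])
    apply (rule has_vector_derivative_real_field)
    apply (rule Fa_deriv[OF assms(1) uv])
    done
  have ci: "chord_integral (\<lambda>z. M n k z (cnj z)) \<beta> \<phi> = Fa n k P Q u v (of_real L) - Fa n k P Q u v 0"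
    unfolding chord_integral_def int_eq L_def[symmetric] using FTC by (simp add: integral_unique)
  define c where "c = - ((v * v)^k * v) / (of_nat (n+1) :: complex)"
  have F0: "Fa n k P Q u v 0 = c * P^(n+1)"
    unfolding Fa_def c_def using PQ by (simp add: Psi_circle)
  have zL: "P - of_real L * u = - cis (2*\<phi> - \<beta>)" unfolding P_def u_def L_def by (rule endpt)
  have wL: "Q - of_real L * v = - cis (\<beta> - 2*\<phi>)" unfolding Q_def v_def L_def by (rule endpt2)
  have prodL: "(- cis (2*\<phi> - \<beta>)) * (- cis (\<beta> - 2*\<phi>)) = 1" by (simp add: cis_mult)
  have FL: "Fa n k P Q u v (of_real L) = c * (- cis (2*\<phi> - \<beta>))^(n+1)"
    unfolding Fa_def c_def zL wL using prodL by (simp add: Psi_circle)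
  have "chord_integral (\<lambda>z. M n k z (cnj z)) \<beta> \<phi> = c * ((- cis (2*\<phi> - \<beta>))^(n+1) - cis \<beta>^(n+1))"
    unfolding ci F0 FL by (simp add: P_def algebra_simps)
  also have "\<dots> = R n k \<beta> \<phi>" unfolding c_def v_def by (rule alg)
  finally show ?thesis .
qed

lemma fanbeam_M:
  fixes \<beta> \<phi> :: real
  assumes "k \<le> n"
  shows "fanbeam (\<lambda>z. M n k z (cnj z)) \<beta> \<phi> = R n k \<beta> \<phi>"
proof (cases "cos (\<beta> - \<phi>) \<ge> 0")
  case True
  have "fanbeam (\<lambda>z. M n k z (cnj z)) \<beta> \<phi> = chord_integral (\<lambda>z. M n k z (cnj z)) \<beta> \<phi>"
    unfolding fanbeam_def by (rule if_P[OF True])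
  also have "\<dots> = R n k \<beta> \<phi>" by (rule chord_M[OF assms True])
  finally show ?thesis .
next
  case False
  have e: "\<beta> - (\<phi> + pi) = (\<beta> - \<phi>) - pi" by simp
  have c: "cos (\<beta> - (\<phi> + pi)) = - cos (\<beta> - \<phi>)" unfolding e by (simp only: cos_diff cos_pi sin_pi) simp
  have nn: "cos (\<beta> - (\<phi> + pi)) \<ge> 0" unfolding c using False by linarith
  have "fanbeam (\<lambda>z. M n k z (cnj z)) \<beta> \<phi> = - chord_integral (\<lambda>z. M n k z (cnj z)) \<beta> (\<phi> + pi)"
    unfolding fanbeam_def by (rule if_not_P[OF False])
  also have "\<dots> = - R n k \<beta> (\<phi> + pi)" by (simp only: chord_M[OF assms nn])
  also have "\<dots> = R n k \<beta> \<phi>" by (simp only: R_shift minus_minus)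
  finally show ?thesis .
qed

theorem theorem2:
  fixes n k :: nat and \<beta> \<phi> :: real
  assumes "k \<le> n"
    and "\<beta> \<in> {0..<2 * pi}" and "\<phi> \<in> {0..<2 * pi}"
  shows "fanbeam (zernike n k) \<beta> \<phi> =
    2 * exp (\<i> * of_int (int n - 2 * int k) * of_real \<phi>) / of_nat (n + 1)
    * (if even n then of_real (cos (real (n + 1) * (\<beta> - \<phi>)))
       else \<i> * of_real (sin (real (n + 1) * (\<beta> - \<phi>))))"
proof -
  have "fanbeam (zernike n k) \<beta> \<phi> = R n k \<beta> \<phi>"
  proof (cases "k \<le> n div 2")
    case True
    have "zernike n k = (\<lambda>z. M n k z (cnj z))"
      using True assms(1) by (simp add: fun_eq_iff zernike_def zernike_low_M)
    then show ?thesis using fanbeam_M[OF assms(1)] by simp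
  next
    case False
    have nk: "n - k \<le> n" by simp
    have Z: "zernike n k = (\<lambda>z. (-1)^n * cnj (M n (n-k) z (cnj z)))"
      using False by (simp add: fun_eq_iff zernike_def zernike_low_M)
    have "fanbeam (zernike n k) \<beta> \<phi> = (-1)^n * cnj (fanbeam (\<lambda>z. M n (n-k) z (cnj z)) \<beta> \<phi>)"
    proof (cases "even n")
      case True
      then show ?thesis unfolding Z by (simp add: fanbeam_cnj)
    next
      case False
      then have "zernike n k = (\<lambda>z. - cnj (M n (n-k) z (cnj z)))" unfolding Z by simp
      then show ?thesis using False by (simp add: fanbeam_cnj fanbeam_neg)
    qed
    also have "\<dots> = R n k \<beta> \<phi>" unfolding fanbeam_M[OF nk] using assms(1) by (rule R_conj)
    finally show ?thesis .
  qed
  then show ?thesis unfolding R_def .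
qed

end
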